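(* Let $\mathcal{L}$ be a finite algebraic language, $\mathcal{V}$ an equational class of $\mathcal{L}$-algebras, $\Sigma$ a finite set of $\mathcal{L}$-identities and $X\supseteq\mathrm{Var}(\Sigma)$ a finite set of variables. Consider the condition $(\star)$: whenever $\Sigma\Rightarrow\Delta$ is $\mathcal{V}$-admissible with $\mathrm{Var}(\Delta)\subseteq X$, there exists $\varphi\approx\psi\in\Delta$ such that $\Sigma\Rightarrow\{\varphi\approx\psi\}$ is $\mathcal{V}$-admissible. If $\mathrm{type}(\mathsf{E}_{\mathcal{V}}(\Sigma,X))=1$, then $\Sigma$ satisfies $(\star)$. Conversely, if $\mathrm{type}(\mathsf{E}_{\mathcal{V}}(\Sigma,X))\in\{1,\omega\}$ and $\Sigma$ satisfies $(\star)$, then $\mathrm{type}(\mathsf{E}_{\mathcal{V}}(\Sigma,X))=1$.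
   Context: $\mathbf{Fm}_{\mathcal{L}}(Y)$ is the formula algebra over variables $Y$ ($\omega$ = all variables); $\mathrm{Var}(\Gamma)$ is the set of variables occurring in $\Gamma$; substitutions are homomorphisms of formula algebras. A clause $\Sigma\Rightarrow\Delta$ is a pair of finite sets of identities; a substitution $\sigma\colon\mathbf{Fm}_{\mathcal{L}}(X)\to\mathbf{Fm}_{\mathcal{L}}(\omega)$ is a $\mathcal{V}$-unifier of $\Gamma$ (with $\mathrm{Var}(\Gamma)\subseteq X$) if $\mathcal{V}\models\sigma(\varphi)\approx\sigma(\psi)$ for all $\varphi\approx\psi\in\Gamma$; $\Sigma\Rightarrow\Delta$ is $\mathcal{V}$-admissible if every substitution $\sigma\colon\mathbf{Fm}_{\mathcal{L}}(\mathrm{Var}(\Sigma\cup\Delta))\to\mathbf{Fm}_{\mathcal{L}}(\omega)$ that $\mathcal{V}$-unifies $\Sigma$ also $\mathcal{V}$-unifies some member of $\Delta$. $h_{\mathcal{V}}$ is the canonical homomorphism from $\mathbf{Fm}_{\mathcal{L}}(Y)$ onto the free algebra $\mathbf{F}_{\mathcal{V}}(Y)$. For substitutions over $X$, $\sigma_2\sqsubseteq_{\mathcal{V}}\sigma_1$ iff $\ker(h_{\mathcal{V}}\circ\sigma_1)\subseteq\ker(h_{\mathcal{V}}\circ\sigma_2)$; $\mathsf{E}_{\mathcal{V}}(\Sigma,X)$ is the set of $\mathcal{V}$-unifiers of $\Sigma$ over $X$ preordered by $\sqsubseteq_{\mathcal{V}}$. Types of a preordered set $(P,\le)$: a complete set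 is $M\subseteq P$ with every $x\in P$ below some $y\in M$; a $\mu$-set is a complete set whose distinct elements are pairwise incomparable; all $\mu$-sets have the same cardinality. The type is $0$ (nullary) if there is no $\mu$-set, $\infty$ (infinitary) if there is an infinite $\mu$-set, $\omega$ (finitary) if there is a finite $\mu$-set of cardinality $>1$, and $1$ (unitary) if there is a $\mu$-set of cardinality $1$; types are ordered $1<\omega<\infty<0$. (Type is considered for nonempty preordered sets.) *)

theory Defs
  imports Main
begin

text \<open>A language is a set F of operation symbols with an arity function ar.
Variables are natural numbers (omega = all variables).\<close>

datatype ('f, 'v) trm = Var 'v | Fun 'f "('f, 'v) trm list"

type_synonym 'f fm = "('f, nat) trm"
type_synonym 'f ident = "'f fm \<times> 'f fm"

fun wf_trm :: "'f set \<Rightarrow> ('f \<Rightarrow> nat) \<Rightarrow> ('f, 'v) trm \<Rightarrow> bool" where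
  "wf_trm F ar (Var x) = True"
| "wf_trm F ar (Fun f ts) = (f \<in> F \<and> length ts = ar f \<and> (\<forall>t \<in> set ts. wf_trm F ar t))"

fun vars_trm :: "('f, 'v) trm \<Rightarrow> 'v set" where
  "vars_trm (Var x) = {x}"
| "vars_trm (Fun f ts) = (\<Union>t \<in> set ts. vars_trm t)"

definition wf_ident :: "'f set \<Rightarrow> ('f \<Rightarrow> nat) \<Rightarrow> 'f ident \<Rightarrow> bool" where
  "wf_ident F ar e = (wf_trm F ar (fst e) \<and> wf_trm F ar (snd e))"

definition vars_ident :: "'f ident \<Rightarrow> nat set" where
  "vars_ident e = vars_trm (fst e) \<union> vars_trm (snd e)"

definition Var_set :: "'f ident set \<Rightarrow> nat set" where
  "Var_set \<Gamma> = (\<Union>e \<in> \<Gamma>. vars_ident e)"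

fun subst :: "(nat \<Rightarrow> 'f fm) \<Rightarrow> 'f fm \<Rightarrow> 'f fm" where
  "subst \<sigma> (Var x) = \<sigma> x"
| "subst \<sigma> (Fun f ts) = Fun f (map (subst \<sigma>) ts)"

fun eval :: "('f \<Rightarrow> 'a list \<Rightarrow> 'a) \<Rightarrow> ('v \<Rightarrow> 'a) \<Rightarrow> ('f, 'v) trm \<Rightarrow> 'a" where
  "eval I \<alpha> (Var x) = \<alpha> x"
| "eval I \<alpha> (Fun f ts) = I f (map (eval I \<alpha>) ts)"

definition is_algebra :: "'f set \<Rightarrow> ('f \<Rightarrow> nat) \<Rightarrow> 'a set \<Rightarrow> ('f \<Rightarrow> 'a list \<Rightarrow> 'a) \<Rightarrow> bool" where
  "is_algebra F ar A I = (A \<noteq> {} \<and>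
     (\<forall>f \<in> F. \<forall>xs. length xs = ar f \<and> set xs \<subseteq> A \<longrightarrow> I f xs \<in> A))"

definition satisfies :: "'a set \<Rightarrow> ('f \<Rightarrow> 'a list \<Rightarrow> 'a) \<Rightarrow> 'f ident \<Rightarrow> bool" where
  "satisfies A I e = (\<forall>\<alpha>. (\<forall>x. \<alpha> x \<in> A) \<longrightarrow> eval I \<alpha> (fst e) = eval I \<alpha> (snd e))"

text \<open>The equational class V is presented as Mod(E) for a set E of identities.  Algebras are taken
with carriers inside the (countable) type of formulas, which is large enough to contain
copies of all free algebras of V, so this is equivalent to validity in all of Mod(E).\<close>

definition V_valid :: "'f set \<Rightarrow> ('f \<Rightarrow> nat) \<Rightarrow> 'f ident set \<Rightarrow> 'f ident \<Rightarrow> bool" where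
  "V_valid F ar E e = (\<forall>(A :: 'f fm set) I. is_algebra F ar A I \<and> (\<forall>d \<in> E. satisfies A I d)
      \<longrightarrow> satisfies A I e)"

definition wf_subst_on :: "'f set \<Rightarrow> ('f \<Rightarrow> nat) \<Rightarrow> nat set \<Rightarrow> (nat \<Rightarrow> 'f fm) \<Rightarrow> bool" where
  "wf_subst_on F ar Y \<sigma> = (\<forall>x \<in> Y. wf_trm F ar (\<sigma> x))"

definition V_unifies :: "'f set \<Rightarrow> ('f \<Rightarrow> nat) \<Rightarrow> 'f ident set \<Rightarrow> (nat \<Rightarrow> 'f fm) \<Rightarrow> 'f ident set \<Rightarrow> bool" where
  "V_unifies F ar E \<sigma> \<Gamma> = (\<forall>(s, t) \<in> \<Gamma>. V_valid F ar E (subst \<sigma> s, subst \<sigma> t))"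

definition admissible :: "'f set \<Rightarrow> ('f \<Rightarrow> nat) \<Rightarrow> 'f ident set \<Rightarrow> 'f ident set \<Rightarrow> 'f ident set \<Rightarrow> bool" where
  "admissible F ar E Sig Delta = (\<forall>\<sigma>. wf_subst_on F ar (Var_set (Sig \<union> Delta)) \<sigma> \<and> V_unifies F ar E \<sigma> Sig
      \<longrightarrow> (\<exists>e \<in> Delta. V_unifies F ar E \<sigma> {e}))"

text \<open>Substitutions Fm(X) -> Fm(omega) are represented by functions that are the identity
outside X.\<close>
definition subst_over :: "'f set \<Rightarrow> ('f \<Rightarrow> nat) \<Rightarrow> nat set \<Rightarrow> (nat \<Rightarrow> 'f fm) \<Rightarrow> bool" where
  "subst_over F ar X \<sigma> = (wf_subst_on F ar X \<sigma> \<and> (\<forall>x. x \<notin> X \<longrightarrow> \<sigma> x = Var x))"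

definition E_V :: "'f set \<Rightarrow> ('f \<Rightarrow> nat) \<Rightarrow> 'f ident set \<Rightarrow> 'f ident set \<Rightarrow> nat set \<Rightarrow> (nat \<Rightarrow> 'f fm) set" where
  "E_V F ar E Sig X = {\<sigma>. subst_over F ar X \<sigma> \<and> V_unifies F ar E \<sigma> Sig}"

text \<open>sigma2 below sigma1 iff ker(h_V o sigma1) is contained in ker(h_V o sigma2),
kernels taken on Fm(X).\<close>
definition less_general :: "'f set \<Rightarrow> ('f \<Rightarrow> nat) \<Rightarrow> 'f ident set \<Rightarrow> nat set
    \<Rightarrow> (nat \<Rightarrow> 'f fm) \<Rightarrow> (nat \<Rightarrow> 'f fm) \<Rightarrow> bool" where
  "less_general F ar E X \<sigma>2 \<sigma>1 = (\<forall>s t. wf_trm F ar s \<and> wf_trm F ar t \<and>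
      vars_trm s \<subseteq> X \<and> vars_trm t \<subseteq> X \<and> V_valid F ar E (subst \<sigma>1 s, subst \<sigma>1 t)
      \<longrightarrow> V_valid F ar E (subst \<sigma>2 s, subst \<sigma>2 t))"

definition complete_set :: "'a set \<Rightarrow> ('a \<Rightarrow> 'a \<Rightarrow> bool) \<Rightarrow> 'a set \<Rightarrow> bool" where
  "complete_set P le M = (M \<subseteq> P \<and> (\<forall>x \<in> P. \<exists>y \<in> M. le x y))"

definition mu_set :: "'a set \<Rightarrow> ('a \<Rightarrow> 'a \<Rightarrow> bool) \<Rightarrow> 'a set \<Rightarrow> bool" where
  "mu_set P le M = (complete_set P le M \<and>
     (\<forall>x \<in> M. \<forall>y \<in> M. x \<noteq> y \<longrightarrow> \<not> le x y \<and> \<not> le y x))"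

datatype unif_type = Unitary | Finitary | Infinitary | Nullary

text \<open>Type 1 / omega / infinity / 0 (all mu-sets have the same cardinality).  The empty
preordered set (for which the paper does not define a type) gets Nullary here.\<close>
definition ptype :: "'a set \<Rightarrow> ('a \<Rightarrow> 'a \<Rightarrow> bool) \<Rightarrow> unif_type" where
  "ptype P le =
    (if \<exists>M. mu_set P le M \<and> finite M \<and> card M = 1 then Unitary
     else if \<exists>M. mu_set P le M \<and> finite M \<and> card M > 1 then Finitary
     else if \<exists>M. mu_set P le M \<and> infinite M then Infinitary
     else Nullary)"

definition star_cond :: "'f set \<Rightarrow> ('f \<Rightarrow> nat) \<Rightarrow> 'f ident set \<Rightarrow> 'f ident set \<Rightarrow> nat set \<Rightarrow> bool" where
  "star_cond F ar E Sig X = (\<forall>Delta. finite Delta \<and> (\<forall>e \<in> Delta. wf_ident F ar e) \<and>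
      Var_set Delta \<subseteq> X \<and> admissible F ar E Sig Delta
      \<longrightarrow> (\<exists>e \<in> Delta. admissible F ar E Sig {e}))"

end

theory Submission
  imports Defs
begin

lemma subst_cong: "(\<forall>x\<in>vars_trm t. \<sigma> x = \<tau> x) \<Longrightarrow> subst \<sigma> t = subst \<tau> t"
  by (induction t) auto

definition restr :: "nat set \<Rightarrow> (nat \<Rightarrow> 'f fm) \<Rightarrow> nat \<Rightarrow> 'f fm" where
  "restr Y \<sigma> = (\<lambda>x. if x \<in> Y then \<sigma> x else Var x)"

lemma restr_over: "Y \<subseteq> X \<Longrightarrow> wf_subst_on F ar Y \<sigma> \<Longrightarrow> subst_over F ar X (restr Y \<sigma>)"
  unfolding subst_over_def wf_subst_on_def restr_def by auto

lemma restr_unif: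
  assumes "Var_set G \<subseteq> Y"
  shows "V_unifies F ar E (restr Y \<sigma>) G = V_unifies F ar E \<sigma> G"
proof -
  have "\<And>s t. (s,t) \<in> G \<Longrightarrow> subst (restr Y \<sigma>) s = subst \<sigma> s \<and> subst (restr Y \<sigma>) t = subst \<sigma> t"
  proof -
    fix s t assume "(s,t) \<in> G"
    hence "vars_trm s \<subseteq> Y" "vars_trm t \<subseteq> Y" using assms
      unfolding Var_set_def vars_ident_def by force+
    thus "subst (restr Y \<sigma>) s = subst \<sigma> s \<and> subst (restr Y \<sigma>) t = subst \<sigma> t"
      by (auto intro!: subst_cong simp: restr_def)
  qed
  thus ?thesis unfolding V_unifies_def by auto
qed

lemma Var_set_Un: "Var_set (A \<union> B) = Var_set A \<union> Var_set B"
  unfolding Var_set_def by auto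

lemma Var_set_insert[simp]: "Var_set (insert e A) = vars_ident e \<union> Var_set A"
  unfolding Var_set_def by auto

lemma Var_set_single: "Var_set {(s,t)} = vars_trm s \<union> vars_trm t"
  unfolding Var_set_def vars_ident_def by auto

lemma wf_mono: "Y \<subseteq> X \<Longrightarrow> wf_subst_on F ar X \<sigma> \<Longrightarrow> wf_subst_on F ar Y \<sigma>"
  unfolding wf_subst_on_def by auto

theorem proposition3p4:
  fixes F :: "'f set" and ar :: "'f \<Rightarrow> nat" and E :: "'f ident set"
    and Sig :: "'f ident set" and X :: "nat set"
  assumes "finite F"
    and "\<forall>e \<in> E. wf_ident F ar e"
    and "finite Sig" and "\<forall>e \<in> Sig. wf_ident F ar e"
    and "finite X" and "Var_set Sig \<subseteq> X"
  shows "(ptype (E_V F ar E Sig X) (less_general F ar E X) = Unitary \<longrightarrow> star_cond F ar E Sig X)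
       \<and> (ptype (E_V F ar E Sig X) (less_general F ar E X) \<in> {Unitary, Finitary}
           \<and> star_cond F ar E Sig X
           \<longrightarrow> ptype (E_V F ar E Sig X) (less_general F ar E X) = Unitary)"
proof (intro conjI impI)
  let ?P = "E_V F ar E Sig X" and ?le = "less_general F ar E X"
  assume "ptype ?P ?le = Unitary"
  then obtain M where M: "mu_set ?P ?le M" "finite M" "card M = 1"
    unfolding ptype_def by (auto split: if_splits)
  then obtain s0 where M0: "M = {s0}" by (meson card_1_singletonE)
  have s0P: "s0 \<in> ?P" and cpl: "\<forall>x\<in>?P. ?le x s0"
    using M(1) M0 unfolding mu_set_def complete_set_def by auto
  show "star_cond F ar E Sig X"
    unfolding star_cond_def
  proof (intro allI impI)
    fix Delta assume D: "finite Delta \<and> (\<forall>e\<in>Delta. wf_ident F ar e) \<and> Var_set Delta \<subseteq> X \<and>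
      admissible F ar E Sig Delta"
    have "wf_subst_on F ar (Var_set (Sig \<union> Delta)) s0" "V_unifies F ar E s0 Sig"
      using s0P D assms(6) unfolding E_V_def subst_over_def wf_subst_on_def Var_set_Un by auto
    then obtain e where e: "e \<in> Delta" "V_unifies F ar E s0 {e}"
      using D unfolding admissible_def by blast
    obtain s t where st: "e = (s,t)" by fastforce
    have ewf: "wf_trm F ar s" "wf_trm F ar t" using D e st unfolding wf_ident_def by auto
    have evars: "vars_trm s \<subseteq> X" "vars_trm t \<subseteq> X"
    proof -
      have "vars_ident e \<subseteq> X" using D e(1) unfolding Var_set_def by auto
      thus "vars_trm s \<subseteq> X" "vars_trm t \<subseteq> X" using st unfolding vars_ident_def by auto
    qed
    have "admissible F ar E Sig {e}"
      unfolding admissible_def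
    proof (intro allI impI)
      fix \<sigma> assume a: "wf_subst_on F ar (Var_set (Sig \<union> {e})) \<sigma> \<and> V_unifies F ar E \<sigma> Sig"
      let ?Y = "Var_set (Sig \<union> {e})"
      have YX: "?Y \<subseteq> X" using assms(6) evars st by (auto simp: Var_set_Un vars_ident_def)
      have "restr ?Y \<sigma> \<in> ?P"
        using restr_over[OF YX] a restr_unif[of Sig ?Y] unfolding E_V_def
        by (auto simp: Var_set_Un)
      hence "?le (restr ?Y \<sigma>) s0" using cpl by blast
      hence "V_unifies F ar E (restr ?Y \<sigma>) {e}"
        using e(2) ewf evars st unfolding less_general_def V_unifies_def by auto
      moreover have "Var_set {e} \<subseteq> ?Y" unfolding Var_set_def by auto
      ultimately have "V_unifies F ar E \<sigma> {e}" using restr_unif[of "{e}" ?Y] by simp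
      thus "\<exists>e'\<in>{e}. V_unifies F ar E \<sigma> {e'}" by blast
    qed
    thus "\<exists>e\<in>Delta. admissible F ar E Sig {e}" using e by blast
  qed
next
  let ?P = "E_V F ar E Sig X" and ?le = "less_general F ar E X"
  assume A: "ptype ?P ?le \<in> {Unitary, Finitary} \<and> star_cond F ar E Sig X"
  show "ptype ?P ?le = Unitary"
  proof (rule ccontr)
    assume nu: "ptype ?P ?le \<noteq> Unitary"
    hence "ptype ?P ?le = Finitary" using A by auto
    hence "\<exists>M. mu_set ?P ?le M \<and> finite M \<and> card M > 1"
      unfolding ptype_def by (metis unif_type.distinct)
    then obtain M where M: "mu_set ?P ?le M" "finite M" "card M > 1" by blast
    have cs: "complete_set ?P ?le M" and inc: "\<forall>x\<in>M. \<forall>y\<in>M. x \<noteq> y \<longrightarrow> \<not> ?le x y \<and> \<not> ?le y x"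
      using M(1) unfolding mu_set_def by simp_all
    have MP: "M \<subseteq> ?P" and cpl: "\<forall>x\<in>?P. \<exists>y\<in>M. ?le x y"
      using cs[unfolded complete_set_def] by (rule conjunct1, rule conjunct2)
    define Q where "Q = (\<lambda>x y (p :: 'f ident). y \<in> M \<and> wf_trm F ar (fst p) \<and> wf_trm F ar (snd p) \<and>
      vars_trm (fst p) \<subseteq> X \<and> vars_trm (snd p) \<subseteq> X
      \<and> V_valid F ar E (subst x (fst p), subst x (snd p))
      \<and> \<not> V_valid F ar E (subst y (fst p), subst y (snd p)))"
    have ex: "\<forall>x\<in>M. \<exists>yp. Q x (fst yp) (snd yp)"
    proof
      fix x assume xM: "x \<in> M"
      have "M \<noteq> {x}" using M(3) by auto
      hence "\<exists>y\<in>M. y \<noteq> x" using xM by blast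
      then obtain y where y: "y \<in> M" "y \<noteq> x" by blast
      hence "\<not> ?le y x" using inc xM by blast
      then obtain s t where "wf_trm F ar s \<and> wf_trm F ar t \<and>
        vars_trm s \<subseteq> X \<and> vars_trm t \<subseteq> X \<and> V_valid F ar E (subst x s, subst x t)
        \<and> \<not> V_valid F ar E (subst y s, subst y t)" unfolding less_general_def by blast
      hence "Q x y (s,t)" using y unfolding Q_def by simp
      thus "\<exists>yp. Q x (fst yp) (snd yp)" by (intro exI[of _ "(y,(s,t))"]) simp
    qed
    then obtain g where g: "\<forall>x\<in>M. Q x (fst (g x)) (snd (g x))" using bchoice[OF ex] by blast
    define w where "w = (\<lambda>x. fst (g x))"
    define d where "d = (\<lambda>x. snd (g x))"
    have w: "\<forall>x\<in>M. w x \<in> M" using g unfolding Q_def w_def by simp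
    have d: "\<forall>x\<in>M. wf_trm F ar (fst (d x)) \<and> wf_trm F ar (snd (d x)) \<and>
      vars_trm (fst (d x)) \<subseteq> X \<and> vars_trm (snd (d x)) \<subseteq> X
      \<and> V_valid F ar E (subst x (fst (d x)), subst x (snd (d x)))
      \<and> \<not> V_valid F ar E (subst (w x) (fst (d x)), subst (w x) (snd (d x)))"
      using g unfolding Q_def w_def d_def by simp
    let ?D = "d ` M"
    have Dvars: "Var_set ?D \<subseteq> X" using d unfolding Var_set_def vars_ident_def by auto
    have Dwf: "\<forall>e\<in>?D. wf_ident F ar e" using d unfolding wf_ident_def by auto
    have adm: "admissible F ar E Sig ?D"
      unfolding admissible_def
    proof (intro allI impI)
      fix \<sigma> assume a: "wf_subst_on F ar (Var_set (Sig \<union> ?D)) \<sigma> \<and> V_unifies F ar E \<sigma> Sig"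
      let ?Y = "Var_set (Sig \<union> ?D)"
      have YX: "?Y \<subseteq> X" using assms(6) Dvars by (auto simp: Var_set_Un)
      have "restr ?Y \<sigma> \<in> ?P"
        using restr_over[OF YX] a restr_unif[of Sig ?Y] unfolding E_V_def
        by (auto simp: Var_set_Un)
      then obtain x where x: "x \<in> M" "?le (restr ?Y \<sigma>) x" using cpl by blast
      hence "V_unifies F ar E (restr ?Y \<sigma>) {d x}"
        using d unfolding less_general_def V_unifies_def by (auto split: prod.splits)
      moreover have "Var_set {d x} \<subseteq> ?Y" using x(1) unfolding Var_set_def by auto
      ultimately have "V_unifies F ar E \<sigma> {d x}" using restr_unif[of "{d x}" ?Y] by auto
      thus "\<exists>e\<in>?D. V_unifies F ar E \<sigma> {e}" using x(1) by blast
    qed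
    then obtain x where x: "x \<in> M" "admissible F ar E Sig {d x}"
      using A Dvars Dwf M(2) unfolding star_cond_def by blast
    have wP: "w x \<in> ?P" using w x MP by auto
    have "Var_set (Sig \<union> {d x}) \<subseteq> X" using assms(6) Dvars x(1)
      unfolding Var_set_def by auto
    hence "wf_subst_on F ar (Var_set (Sig \<union> {d x})) (w x) \<and> V_unifies F ar E (w x) Sig"
      using wP wf_mono unfolding E_V_def subst_over_def by blast
    hence "V_unifies F ar E (w x) {d x}" using x(2) unfolding admissible_def by blast
    thus False using d x(1) unfolding V_unifies_def by (auto split: prod.splits)
  qed
qed

end
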